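(* In the standing setup with $A$ generic, let $g_i=B_i^{\rm T}f_0$ ($i=1,2,3$) and for $\varepsilon\ne 0$ let $\widetilde H(x,\varepsilon)=\varepsilon^{-1}x^{\rm T}J(I-\varepsilon f_0'(x))^{-1}x$ and $\widetilde K_i(x,\varepsilon)=\varepsilon^{-1}x^{\rm T}J(I-\varepsilon g_i'(x))^{-1}x$. Then $\widetilde K_1+\widetilde K_2+\widetilde K_3=\widetilde H$.
   Context: Standing setup: $J=\begin{pmatrix}0&I_3\\-I_3&0\end{pmatrix}$ ($6\times6$). $A$ is a fixed real $6\times 6$ skew-Hamiltonian matrix ($A^{\rm T}J=JA$). $H_0$ is a homogeneous cubic polynomial on $\mathbb R^6$ with $A\nabla^2H_0(x)=\nabla^2H_0(x)A^{\rm T}$ for all $x$ ($\nabla^2$ = Hesse matrix), $H_1,H_2$ homogeneous cubic polynomials with $\nabla H_1=A\nabla H_0$, $\nabla H_2=A\nabla H_1$, $f_i=J\nabla H_i$, primes denote Jacobi matrices. Genericity: the characteristic polynomial of $A$ (a square of a cubic) has three pairwise distinct roots $\lambda_1,\lambda_2,\lambda_3$, each a double eigenvalue. $B_i=\alpha_iI+\beta_iA+\gamma_iA^2$ ($i=1,2,3$), where $\alpha_i+\beta_i\lambda+\gamma_i\lambda^2$ is the unique polynomial of degree $\le2$ equal to $-1$ at $\lambda_i$ and to $1$ at the other two eigenvalues; then $B_i^2=I$ and $B_1+B_2+B_3=I$. *)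

theory Defs
  imports "HOL-Analysis.Analysis"
begin

definition Jmat :: "real^6^6" where
  "Jmat = (\<chi> i j. if (i, j) \<in> {(0,3),(1,4),(2,5)} then 1
                   else if (i, j) \<in> {(3,0),(4,1),(5,2)} then -1 else 0)"

definition homog_cubic :: "(real^6 \<Rightarrow> real) \<Rightarrow> bool" where
  "homog_cubic H \<longleftrightarrow> (\<exists>c :: 6 \<Rightarrow> 6 \<Rightarrow> 6 \<Rightarrow> real.
      \<forall>x. H x = (\<Sum>i\<in>UNIV. \<Sum>j\<in>UNIV. \<Sum>k\<in>UNIV. c i j k * x$i * x$j * x$k))"

definition grad :: "(real^'n \<Rightarrow> real) \<Rightarrow> real^'n \<Rightarrow> real^'n" where
  "grad H x = (\<chi> i. frechet_derivative H (at x) (axis i 1))"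

definition jacobi :: "(real^'n \<Rightarrow> 'a::real_normed_vector^'m) \<Rightarrow> real^'n \<Rightarrow> 'a^'n^'m" where
  "jacobi f x = (\<chi> i j. frechet_derivative f (at x) (axis j 1) $ i)"

definition hesse :: "(real^'n \<Rightarrow> real) \<Rightarrow> real^'n \<Rightarrow> real^'n^'n" where
  "hesse H x = jacobi (grad H) x"

definition cvec :: "real^'n \<Rightarrow> complex^'n" where
  "cvec x = (\<chi> i. complex_of_real (x$i))"

definition cmat :: "real^'n^'m \<Rightarrow> complex^'n^'m" where
  "cmat M = (\<chi> i j. complex_of_real (M$i$j))"

definition qform :: "'a::comm_ring_1^'n^'n \<Rightarrow> 'a^'n \<Rightarrow> 'a" where
  "qform M x = (\<Sum>i\<in>UNIV. x$i * (M *v x)$i)"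

end

theory Submission imports Defs "HOL-Computational_Algebra.Polynomial" begin

lemma U6: "(UNIV::6 set) = {0,1,2,3,4,5}"
proof -
  have "card (UNIV::6 set) = 6" by simp
  moreover have "card ({0,1,2,3,4,5}::6 set) = 6" by simp
  ultimately show ?thesis by (metis card_subset_eq finite subset_UNIV)
qed

lemma sum6: "sum f (UNIV::6 set) = f 0 + f 1 + f 2 + f 3 + f 4 + f 5"
  unfolding U6 by (simp add: add.assoc)

lemma all6: "(\<forall>i::6. P i) \<longleftrightarrow> P 0 \<and> P 1 \<and> P 2 \<and> P 3 \<and> P 4 \<and> P 5"
proof -
  have "(\<forall>i::6. P i) \<longleftrightarrow> (\<forall>i\<in>(UNIV::6 set). P i)" by simp
  also have "\<dots> \<longleftrightarrow> (\<forall>i\<in>{0,1,2,3,4,5}. P i)" by (simp only: U6)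
  also have "\<dots> \<longleftrightarrow> P 0 \<and> P 1 \<and> P 2 \<and> P 3 \<and> P 4 \<and> P 5" by simp
  finally show ?thesis .
qed

definition PiM0 :: "complex^6^6 \<Rightarrow> complex^6^6" where
  "PiM0 Y = (\<chi> i j. if i = 0 then (if j = 0 then 0 else if j = 1 then (- Y$2$3 * Y$4$5 + Y$2$4 * Y$3$5 - Y$2$5 * Y$3$4) else if j = 2 then (Y$1$3 * Y$4$5 - Y$1$4 * Y$3$5 + Y$1$5 * Y$3$4) else if j = 3 then (- Y$1$2 * Y$4$5 + Y$1$4 * Y$2$5 - Y$1$5 * Y$2$4) else if j = 4 then (Y$1$2 * Y$3$5 - Y$1$3 * Y$2$5 + Y$1$5 * Y$2$3) else (- Y$1$2 * Y$3$4 + Y$1$3 * Y$2$4 - Y$1$4 * Y$2$3)) else if i = 1 then (if j = 0 then (Y$2$3 * Y$4$5 - Y$2$4 * Y$3$5 + Y$2$5 * Y$3$4) else if j = 1 then 0 else if j = 2 then (- Y$0$3 * Y$4$5 + Y$0$4 * Y$3$5 - Y$0$5 * Y$3$4) else if j = 3 then (Y$0$2 * Y$4$5 - Y$0$4 * Y$2$5 + Y$0$5 * Y$2$4) else if j = 4 then (- Y$0$2 * Y$3$5 + Y$0$3 * Y$2$5 - Y$0$5 * Y$2$3) else (Y$0$2 * Y$3$4 - Y$0$3 * Y$2$4 + Y$0$4 * Y$2$3)) else if i = 2 then (if j = 0 then (- Y$1$3 * Y$4$5 + Y$1$4 * Y$3$5 - Y$1$5 * Y$3$4) else if j = 1 then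 (Y$0$3 * Y$4$5 - Y$0$4 * Y$3$5 + Y$0$5 * Y$3$4) else if j = 2 then 0 else if j = 3 then (- Y$0$1 * Y$4$5 + Y$0$4 * Y$1$5 - Y$0$5 * Y$1$4) else if j = 4 then (Y$0$1 * Y$3$5 - Y$0$3 * Y$1$5 + Y$0$5 * Y$1$3) else (- Y$0$1 * Y$3$4 + Y$0$3 * Y$1$4 - Y$0$4 * Y$1$3)) else if i = 3 then (if j = 0 then (Y$1$2 * Y$4$5 - Y$1$4 * Y$2$5 + Y$1$5 * Y$2$4) else if j = 1 then (- Y$0$2 * Y$4$5 + Y$0$4 * Y$2$5 - Y$0$5 * Y$2$4) else if j = 2 then (Y$0$1 * Y$4$5 - Y$0$4 * Y$1$5 + Y$0$5 * Y$1$4) else if j = 3 then 0 else if j = 4 then (- Y$0$1 * Y$2$5 + Y$0$2 * Y$1$5 - Y$0$5 * Y$1$2) else (Y$0$1 * Y$2$4 - Y$0$2 * Y$1$4 + Y$0$4 * Y$1$2)) else if i = 4 then (if j = 0 then (- Y$1$2 * Y$3$5 + Y$1$3 * Y$2$5 - Y$1$5 * Y$2$3) else if j = 1 then (Y$0$2 * Y$3$5 - Y$0$3 * Y$2$5 + Y$0$5 * Y$2$3) else if j = 2 then (- Y$0$1 * Y$3$5 + Y$0$3 * Y$1$5 - Y$0$5 * Y$1$3) else if j = 3 then (Y$0$1 * Y$2$5 - Y$0$2 * Y$1$5 + Y$0$5 * Y$1$2) else if j = 4 then 0 else (- Y$0$1 * Y$2$3 + Y$0$2 * Y$1$3 - Y$0$3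 * Y$1$2)) else (if j = 0 then (Y$1$2 * Y$3$4 - Y$1$3 * Y$2$4 + Y$1$4 * Y$2$3) else if j = 1 then (- Y$0$2 * Y$3$4 + Y$0$3 * Y$2$4 - Y$0$4 * Y$2$3) else if j = 2 then (Y$0$1 * Y$3$4 - Y$0$3 * Y$1$4 + Y$0$4 * Y$1$3) else if j = 3 then (- Y$0$1 * Y$2$4 + Y$0$2 * Y$1$4 - Y$0$4 * Y$1$2) else if j = 4 then (Y$0$1 * Y$2$3 - Y$0$2 * Y$1$3 + Y$0$3 * Y$1$2) else 0))"

lemma PiM0_00: "PiM0 Y $ 0 $ 0 = 0" by (simp add: PiM0_def)
lemma PiM0_01: "PiM0 Y $ 0 $ 1 = (- Y$2$3 * Y$4$5 + Y$2$4 * Y$3$5 - Y$2$5 * Y$3$4)" by (simp add: PiM0_def)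
lemma PiM0_02: "PiM0 Y $ 0 $ 2 = (Y$1$3 * Y$4$5 - Y$1$4 * Y$3$5 + Y$1$5 * Y$3$4)" by (simp add: PiM0_def)
lemma PiM0_03: "PiM0 Y $ 0 $ 3 = (- Y$1$2 * Y$4$5 + Y$1$4 * Y$2$5 - Y$1$5 * Y$2$4)" by (simp add: PiM0_def)
lemma PiM0_04: "PiM0 Y $ 0 $ 4 = (Y$1$2 * Y$3$5 - Y$1$3 * Y$2$5 + Y$1$5 * Y$2$3)" by (simp add: PiM0_def)
lemma PiM0_05: "PiM0 Y $ 0 $ 5 = (- Y$1$2 * Y$3$4 + Y$1$3 * Y$2$4 - Y$1$4 * Y$2$3)" by (simp add: PiM0_def)
lemma PiM0_10: "PiM0 Y $ 1 $ 0 = (Y$2$3 * Y$4$5 - Y$2$4 * Y$3$5 + Y$2$5 * Y$3$4)" by (simp add: PiM0_def)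
lemma PiM0_11: "PiM0 Y $ 1 $ 1 = 0" by (simp add: PiM0_def)
lemma PiM0_12: "PiM0 Y $ 1 $ 2 = (- Y$0$3 * Y$4$5 + Y$0$4 * Y$3$5 - Y$0$5 * Y$3$4)" by (simp add: PiM0_def)
lemma PiM0_13: "PiM0 Y $ 1 $ 3 = (Y$0$2 * Y$4$5 - Y$0$4 * Y$2$5 + Y$0$5 * Y$2$4)" by (simp add: PiM0_def)
lemma PiM0_14: "PiM0 Y $ 1 $ 4 = (- Y$0$2 * Y$3$5 + Y$0$3 * Y$2$5 - Y$0$5 * Y$2$3)" by (simp add: PiM0_def)
lemma PiM0_15: "PiM0 Y $ 1 $ 5 = (Y$0$2 * Y$3$4 - Y$0$3 * Y$2$4 + Y$0$4 * Y$2$3)" by (simp add: PiM0_def)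
lemma PiM0_20: "PiM0 Y $ 2 $ 0 = (- Y$1$3 * Y$4$5 + Y$1$4 * Y$3$5 - Y$1$5 * Y$3$4)" by (simp add: PiM0_def)
lemma PiM0_21: "PiM0 Y $ 2 $ 1 = (Y$0$3 * Y$4$5 - Y$0$4 * Y$3$5 + Y$0$5 * Y$3$4)" by (simp add: PiM0_def)
lemma PiM0_22: "PiM0 Y $ 2 $ 2 = 0" by (simp add: PiM0_def)
lemma PiM0_23: "PiM0 Y $ 2 $ 3 = (- Y$0$1 * Y$4$5 + Y$0$4 * Y$1$5 - Y$0$5 * Y$1$4)" by (simp add: PiM0_def)
lemma PiM0_24: "PiM0 Y $ 2 $ 4 = (Y$0$1 * Y$3$5 - Y$0$3 * Y$1$5 + Y$0$5 * Y$1$3)" by (simp add: PiM0_def)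
lemma PiM0_25: "PiM0 Y $ 2 $ 5 = (- Y$0$1 * Y$3$4 + Y$0$3 * Y$1$4 - Y$0$4 * Y$1$3)" by (simp add: PiM0_def)
lemma PiM0_30: "PiM0 Y $ 3 $ 0 = (Y$1$2 * Y$4$5 - Y$1$4 * Y$2$5 + Y$1$5 * Y$2$4)" by (simp add: PiM0_def)
lemma PiM0_31: "PiM0 Y $ 3 $ 1 = (- Y$0$2 * Y$4$5 + Y$0$4 * Y$2$5 - Y$0$5 * Y$2$4)" by (simp add: PiM0_def)
lemma PiM0_32: "PiM0 Y $ 3 $ 2 = (Y$0$1 * Y$4$5 - Y$0$4 * Y$1$5 + Y$0$5 * Y$1$4)" by (simp add: PiM0_def)
lemma PiM0_33: "PiM0 Y $ 3 $ 3 = 0" by (simp add: PiM0_def)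
lemma PiM0_34: "PiM0 Y $ 3 $ 4 = (- Y$0$1 * Y$2$5 + Y$0$2 * Y$1$5 - Y$0$5 * Y$1$2)" by (simp add: PiM0_def)
lemma PiM0_35: "PiM0 Y $ 3 $ 5 = (Y$0$1 * Y$2$4 - Y$0$2 * Y$1$4 + Y$0$4 * Y$1$2)" by (simp add: PiM0_def)
lemma PiM0_40: "PiM0 Y $ 4 $ 0 = (- Y$1$2 * Y$3$5 + Y$1$3 * Y$2$5 - Y$1$5 * Y$2$3)" by (simp add: PiM0_def)
lemma PiM0_41: "PiM0 Y $ 4 $ 1 = (Y$0$2 * Y$3$5 - Y$0$3 * Y$2$5 + Y$0$5 * Y$2$3)" by (simp add: PiM0_def)
lemma PiM0_42: "PiM0 Y $ 4 $ 2 = (- Y$0$1 * Y$3$5 + Y$0$3 * Y$1$5 - Y$0$5 * Y$1$3)" by (simp add: PiM0_def)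
lemma PiM0_43: "PiM0 Y $ 4 $ 3 = (Y$0$1 * Y$2$5 - Y$0$2 * Y$1$5 + Y$0$5 * Y$1$2)" by (simp add: PiM0_def)
lemma PiM0_44: "PiM0 Y $ 4 $ 4 = 0" by (simp add: PiM0_def)
lemma PiM0_45: "PiM0 Y $ 4 $ 5 = (- Y$0$1 * Y$2$3 + Y$0$2 * Y$1$3 - Y$0$3 * Y$1$2)" by (simp add: PiM0_def)
lemma PiM0_50: "PiM0 Y $ 5 $ 0 = (Y$1$2 * Y$3$4 - Y$1$3 * Y$2$4 + Y$1$4 * Y$2$3)" by (simp add: PiM0_def)
lemma PiM0_51: "PiM0 Y $ 5 $ 1 = (- Y$0$2 * Y$3$4 + Y$0$3 * Y$2$4 - Y$0$4 * Y$2$3)" by (simp add: PiM0_def)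
lemma PiM0_52: "PiM0 Y $ 5 $ 2 = (Y$0$1 * Y$3$4 - Y$0$3 * Y$1$4 + Y$0$4 * Y$1$3)" by (simp add: PiM0_def)
lemma PiM0_53: "PiM0 Y $ 5 $ 3 = (- Y$0$1 * Y$2$4 + Y$0$2 * Y$1$4 - Y$0$4 * Y$1$2)" by (simp add: PiM0_def)
lemma PiM0_54: "PiM0 Y $ 5 $ 4 = (Y$0$1 * Y$2$3 - Y$0$2 * Y$1$3 + Y$0$3 * Y$1$2)" by (simp add: PiM0_def)
lemma PiM0_55: "PiM0 Y $ 5 $ 5 = 0" by (simp add: PiM0_def)
lemmas PiM0_ent = PiM0_00 PiM0_01 PiM0_02 PiM0_03 PiM0_04 PiM0_05 PiM0_10 PiM0_11 PiM0_12 PiM0_13 PiM0_14 PiM0_15 PiM0_20 PiM0_21 PiM0_22 PiM0_23 PiM0_24 PiM0_25 PiM0_30 PiM0_31 PiM0_32 PiM0_33 PiM0_34 PiM0_35 PiM0_40 PiM0_41 PiM0_42 PiM0_43 PiM0_44 PiM0_45 PiM0_50 PiM0_51 PiM0_52 PiM0_53 PiM0_54 PiM0_55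

definition PiM1 :: "complex^6^6 \<Rightarrow> complex^6^6" where
  "PiM1 Y = (\<chi> i j. if i = 0 then (if j = 0 then 0 else if j = 1 then (Y$3$4) else if j = 2 then (Y$3$5) else if j = 3 then (- Y$1$4 - Y$2$5) else if j = 4 then (Y$1$3) else (Y$2$3)) else if i = 1 then (if j = 0 then (- Y$3$4) else if j = 1 then 0 else if j = 2 then (Y$4$5) else if j = 3 then (Y$0$4) else if j = 4 then (- Y$0$3 - Y$2$5) else (Y$2$4)) else if i = 2 then (if j = 0 then (- Y$3$5) else if j = 1 then (- Y$4$5) else if j = 2 then 0 else if j = 3 then (Y$0$5) else if j = 4 then (Y$1$5) else (- Y$0$3 - Y$1$4)) else if i = 3 then (if j = 0 then (Y$1$4 + Y$2$5) else if j = 1 then (- Y$0$4) else if j = 2 then (- Y$0$5) else if j = 3 then 0 else if j = 4 then (Y$0$1) else (Y$0$2)) else if i = 4 then (if j = 0 then (- Y$1$3) else if j = 1 then (Y$0$3 + Y$2$5) else if j = 2 then (- Y$1$5) else if j = 3 then (- Y$0$1) else if j = 4 then 0 else (Y$1$2)) else (if j = 0 then (- Y$2$3) else if j = 1 then (- Y$2$4) else if j = 2 then (Y$0$3 + Y$1$4) else if j = 3 then (- Y$0$2) else if j = 4 then (- Y$1$2) else 0))"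

lemma PiM1_00: "PiM1 Y $ 0 $ 0 = 0" by (simp add: PiM1_def)
lemma PiM1_01: "PiM1 Y $ 0 $ 1 = (Y$3$4)" by (simp add: PiM1_def)
lemma PiM1_02: "PiM1 Y $ 0 $ 2 = (Y$3$5)" by (simp add: PiM1_def)
lemma PiM1_03: "PiM1 Y $ 0 $ 3 = (- Y$1$4 - Y$2$5)" by (simp add: PiM1_def)
lemma PiM1_04: "PiM1 Y $ 0 $ 4 = (Y$1$3)" by (simp add: PiM1_def)
lemma PiM1_05: "PiM1 Y $ 0 $ 5 = (Y$2$3)" by (simp add: PiM1_def)
lemma PiM1_10: "PiM1 Y $ 1 $ 0 = (- Y$3$4)" by (simp add: PiM1_def)
lemma PiM1_11: "PiM1 Y $ 1 $ 1 = 0" by (simp add: PiM1_def)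
lemma PiM1_12: "PiM1 Y $ 1 $ 2 = (Y$4$5)" by (simp add: PiM1_def)
lemma PiM1_13: "PiM1 Y $ 1 $ 3 = (Y$0$4)" by (simp add: PiM1_def)
lemma PiM1_14: "PiM1 Y $ 1 $ 4 = (- Y$0$3 - Y$2$5)" by (simp add: PiM1_def)
lemma PiM1_15: "PiM1 Y $ 1 $ 5 = (Y$2$4)" by (simp add: PiM1_def)
lemma PiM1_20: "PiM1 Y $ 2 $ 0 = (- Y$3$5)" by (simp add: PiM1_def)
lemma PiM1_21: "PiM1 Y $ 2 $ 1 = (- Y$4$5)" by (simp add: PiM1_def)
lemma PiM1_22: "PiM1 Y $ 2 $ 2 = 0" by (simp add: PiM1_def)
lemma PiM1_23: "PiM1 Y $ 2 $ 3 = (Y$0$5)" by (simp add: PiM1_def)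
lemma PiM1_24: "PiM1 Y $ 2 $ 4 = (Y$1$5)" by (simp add: PiM1_def)
lemma PiM1_25: "PiM1 Y $ 2 $ 5 = (- Y$0$3 - Y$1$4)" by (simp add: PiM1_def)
lemma PiM1_30: "PiM1 Y $ 3 $ 0 = (Y$1$4 + Y$2$5)" by (simp add: PiM1_def)
lemma PiM1_31: "PiM1 Y $ 3 $ 1 = (- Y$0$4)" by (simp add: PiM1_def)
lemma PiM1_32: "PiM1 Y $ 3 $ 2 = (- Y$0$5)" by (simp add: PiM1_def)
lemma PiM1_33: "PiM1 Y $ 3 $ 3 = 0" by (simp add: PiM1_def)
lemma PiM1_34: "PiM1 Y $ 3 $ 4 = (Y$0$1)" by (simp add: PiM1_def)
lemma PiM1_35: "PiM1 Y $ 3 $ 5 = (Y$0$2)" by (simp add: PiM1_def)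
lemma PiM1_40: "PiM1 Y $ 4 $ 0 = (- Y$1$3)" by (simp add: PiM1_def)
lemma PiM1_41: "PiM1 Y $ 4 $ 1 = (Y$0$3 + Y$2$5)" by (simp add: PiM1_def)
lemma PiM1_42: "PiM1 Y $ 4 $ 2 = (- Y$1$5)" by (simp add: PiM1_def)
lemma PiM1_43: "PiM1 Y $ 4 $ 3 = (- Y$0$1)" by (simp add: PiM1_def)
lemma PiM1_44: "PiM1 Y $ 4 $ 4 = 0" by (simp add: PiM1_def)
lemma PiM1_45: "PiM1 Y $ 4 $ 5 = (Y$1$2)" by (simp add: PiM1_def)
lemma PiM1_50: "PiM1 Y $ 5 $ 0 = (- Y$2$3)" by (simp add: PiM1_def)
lemma PiM1_51: "PiM1 Y $ 5 $ 1 = (- Y$2$4)" by (simp add: PiM1_def)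
lemma PiM1_52: "PiM1 Y $ 5 $ 2 = (Y$0$3 + Y$1$4)" by (simp add: PiM1_def)
lemma PiM1_53: "PiM1 Y $ 5 $ 3 = (- Y$0$2)" by (simp add: PiM1_def)
lemma PiM1_54: "PiM1 Y $ 5 $ 4 = (- Y$1$2)" by (simp add: PiM1_def)
lemma PiM1_55: "PiM1 Y $ 5 $ 5 = 0" by (simp add: PiM1_def)
lemmas PiM1_ent = PiM1_00 PiM1_01 PiM1_02 PiM1_03 PiM1_04 PiM1_05 PiM1_10 PiM1_11 PiM1_12 PiM1_13 PiM1_14 PiM1_15 PiM1_20 PiM1_21 PiM1_22 PiM1_23 PiM1_24 PiM1_25 PiM1_30 PiM1_31 PiM1_32 PiM1_33 PiM1_34 PiM1_35 PiM1_40 PiM1_41 PiM1_42 PiM1_43 PiM1_44 PiM1_45 PiM1_50 PiM1_51 PiM1_52 PiM1_53 PiM1_54 PiM1_55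

definition PiM2 :: "complex^6^6 \<Rightarrow> complex^6^6" where
  "PiM2 Y = (\<chi> i j. if i = 0 then (if j = 0 then 0 else if j = 1 then 0 else if j = 2 then 0 else if j = 3 then (1) else if j = 4 then 0 else 0) else if i = 1 then (if j = 0 then 0 else if j = 1 then 0 else if j = 2 then 0 else if j = 3 then 0 else if j = 4 then (1) else 0) else if i = 2 then (if j = 0 then 0 else if j = 1 then 0 else if j = 2 then 0 else if j = 3 then 0 else if j = 4 then 0 else (1)) else if i = 3 then (if j = 0 then (- 1) else if j = 1 then 0 else if j = 2 then 0 else if j = 3 then 0 else if j = 4 then 0 else 0) else if i = 4 then (if j = 0 then 0 else if j = 1 then (- 1) else if j = 2 then 0 else if j = 3 then 0 else if j = 4 then 0 else 0) else (if j = 0 then 0 else if j = 1 then 0 else if j = 2 then (- 1) else if j = 3 then 0 else if j = 4 then 0 else 0))"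

lemma PiM2_00: "PiM2 Y $ 0 $ 0 = 0" by (simp add: PiM2_def)
lemma PiM2_01: "PiM2 Y $ 0 $ 1 = 0" by (simp add: PiM2_def)
lemma PiM2_02: "PiM2 Y $ 0 $ 2 = 0" by (simp add: PiM2_def)
lemma PiM2_03: "PiM2 Y $ 0 $ 3 = (1)" by (simp add: PiM2_def)
lemma PiM2_04: "PiM2 Y $ 0 $ 4 = 0" by (simp add: PiM2_def)
lemma PiM2_05: "PiM2 Y $ 0 $ 5 = 0" by (simp add: PiM2_def)
lemma PiM2_10: "PiM2 Y $ 1 $ 0 = 0" by (simp add: PiM2_def)
lemma PiM2_11: "PiM2 Y $ 1 $ 1 = 0" by (simp add: PiM2_def)
lemma PiM2_12: "PiM2 Y $ 1 $ 2 = 0" by (simp add: PiM2_def)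
lemma PiM2_13: "PiM2 Y $ 1 $ 3 = 0" by (simp add: PiM2_def)
lemma PiM2_14: "PiM2 Y $ 1 $ 4 = (1)" by (simp add: PiM2_def)
lemma PiM2_15: "PiM2 Y $ 1 $ 5 = 0" by (simp add: PiM2_def)
lemma PiM2_20: "PiM2 Y $ 2 $ 0 = 0" by (simp add: PiM2_def)
lemma PiM2_21: "PiM2 Y $ 2 $ 1 = 0" by (simp add: PiM2_def)
lemma PiM2_22: "PiM2 Y $ 2 $ 2 = 0" by (simp add: PiM2_def)
lemma PiM2_23: "PiM2 Y $ 2 $ 3 = 0" by (simp add: PiM2_def)
lemma PiM2_24: "PiM2 Y $ 2 $ 4 = 0" by (simp add: PiM2_def)
lemma PiM2_25: "PiM2 Y $ 2 $ 5 = (1)" by (simp add: PiM2_def)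
lemma PiM2_30: "PiM2 Y $ 3 $ 0 = (- 1)" by (simp add: PiM2_def)
lemma PiM2_31: "PiM2 Y $ 3 $ 1 = 0" by (simp add: PiM2_def)
lemma PiM2_32: "PiM2 Y $ 3 $ 2 = 0" by (simp add: PiM2_def)
lemma PiM2_33: "PiM2 Y $ 3 $ 3 = 0" by (simp add: PiM2_def)
lemma PiM2_34: "PiM2 Y $ 3 $ 4 = 0" by (simp add: PiM2_def)
lemma PiM2_35: "PiM2 Y $ 3 $ 5 = 0" by (simp add: PiM2_def)
lemma PiM2_40: "PiM2 Y $ 4 $ 0 = 0" by (simp add: PiM2_def)
lemma PiM2_41: "PiM2 Y $ 4 $ 1 = (- 1)" by (simp add: PiM2_def)
lemma PiM2_42: "PiM2 Y $ 4 $ 2 = 0" by (simp add: PiM2_def)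
lemma PiM2_43: "PiM2 Y $ 4 $ 3 = 0" by (simp add: PiM2_def)
lemma PiM2_44: "PiM2 Y $ 4 $ 4 = 0" by (simp add: PiM2_def)
lemma PiM2_45: "PiM2 Y $ 4 $ 5 = 0" by (simp add: PiM2_def)
lemma PiM2_50: "PiM2 Y $ 5 $ 0 = 0" by (simp add: PiM2_def)
lemma PiM2_51: "PiM2 Y $ 5 $ 1 = 0" by (simp add: PiM2_def)
lemma PiM2_52: "PiM2 Y $ 5 $ 2 = (- 1)" by (simp add: PiM2_def)
lemma PiM2_53: "PiM2 Y $ 5 $ 3 = 0" by (simp add: PiM2_def)
lemma PiM2_54: "PiM2 Y $ 5 $ 4 = 0" by (simp add: PiM2_def)
lemma PiM2_55: "PiM2 Y $ 5 $ 5 = 0" by (simp add: PiM2_def)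
lemmas PiM2_ent = PiM2_00 PiM2_01 PiM2_02 PiM2_03 PiM2_04 PiM2_05 PiM2_10 PiM2_11 PiM2_12 PiM2_13 PiM2_14 PiM2_15 PiM2_20 PiM2_21 PiM2_22 PiM2_23 PiM2_24 PiM2_25 PiM2_30 PiM2_31 PiM2_32 PiM2_33 PiM2_34 PiM2_35 PiM2_40 PiM2_41 PiM2_42 PiM2_43 PiM2_44 PiM2_45 PiM2_50 PiM2_51 PiM2_52 PiM2_53 PiM2_54 PiM2_55

definition pft0 :: "complex^6^6 \<Rightarrow> complex" where
  "pft0 Y = (- Y$0$1 * Y$2$3 * Y$4$5 + Y$0$1 * Y$2$4 * Y$3$5 - Y$0$1 * Y$2$5 * Y$3$4 + Y$0$2 * Y$1$3 * Y$4$5 - Y$0$2 * Y$1$4 * Y$3$5 + Y$0$2 * Y$1$5 * Y$3$4 - Y$0$3 * Y$1$2 * Y$4$5 + Y$0$3 * Y$1$4 * Y$2$5 - Y$0$3 * Y$1$5 * Y$2$4 + Y$0$4 * Y$1$2 * Y$3$5 - Y$0$4 * Y$1$3 * Y$2$5 + Y$0$4 * Y$1$5 * Y$2$3 - Y$0$5 * Y$1$2 * Y$3$4 + Y$0$5 * Y$1$3 * Y$2$4 - Y$0$5 * Y$1$4 * Y$2$3)"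

definition pft1 :: "complex^6^6 \<Rightarrow> complex" where
  "pft1 Y = (Y$0$1 * Y$3$4 + Y$0$2 * Y$3$5 - Y$0$3 * Y$1$4 - Y$0$3 * Y$2$5 + Y$0$4 * Y$1$3 + Y$0$5 * Y$2$3 + Y$1$2 * Y$4$5 - Y$1$4 * Y$2$5 + Y$1$5 * Y$2$4)"

definition pft2 :: "complex^6^6 \<Rightarrow> complex" where
  "pft2 Y = (Y$0$3 + Y$1$4 + Y$2$5)"

definition pft3 :: "complex^6^6 \<Rightarrow> complex" where
  "pft3 Y = (- 1)"

lemma Jc_ent: "cmat Jmat $ i $ j = (if (i, j) \<in> {(0,3),(1,4),(2,5)} then 1
                   else if (i, j) \<in> {(3,0),(4,1),(5,2)} then -1 else 0)"
  by (simp add: cmat_def Jmat_def)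

lemma pf_ids:
  fixes Y :: "complex^6^6"
  assumes as: "\<And>a b. Y$b$a = - Y$a$b"
  shows "- (PiM0 Y ** Y) = mat (pft0 Y)"
    "PiM0 Y ** cmat Jmat - PiM1 Y ** Y = mat (pft1 Y)"
    "PiM1 Y ** cmat Jmat - PiM2 Y ** Y = mat (pft2 Y)"
    "PiM2 Y ** cmat Jmat = mat (pft3 Y)"
proof -
  have d: "\<And>a. Y$a$a = 0" proof - fix a have "Y$a$a = - Y$a$a" by (rule as) thus "Y$a$a = 0" by simp qed
  have s: "Y$1$0 = - Y$0$1" "Y$2$0 = - Y$0$2" "Y$3$0 = - Y$0$3" "Y$4$0 = - Y$0$4" "Y$5$0 = - Y$0$5"
     "Y$2$1 = - Y$1$2" "Y$3$1 = - Y$1$3" "Y$4$1 = - Y$1$4" "Y$5$1 = - Y$1$5"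
     "Y$3$2 = - Y$2$3" "Y$4$2 = - Y$2$4" "Y$5$2 = - Y$2$5"
     "Y$4$3 = - Y$3$4" "Y$5$3 = - Y$3$5" "Y$5$4 = - Y$4$5" by (rule as)+
  show "- (PiM0 Y ** Y) = mat (pft0 Y)"
    unfolding vec_eq_iff all6 matrix_matrix_mult_def mat_def vector_uminus_component vec_lambda_beta sum6
    by (simp add: PiM0_ent pft0_def d s algebra_simps)
  show "PiM0 Y ** cmat Jmat - PiM1 Y ** Y = mat (pft1 Y)"
    unfolding vec_eq_iff all6 matrix_matrix_mult_def mat_def vector_minus_component vec_lambda_beta sum6
    by (simp add: PiM0_ent PiM1_ent Jc_ent pft1_def d s algebra_simps)
  show "PiM1 Y ** cmat Jmat - PiM2 Y ** Y = mat (pft2 Y)"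
    unfolding vec_eq_iff all6 matrix_matrix_mult_def mat_def vector_minus_component vec_lambda_beta sum6
    by (simp add: PiM2_ent PiM1_ent Jc_ent pft2_def d s algebra_simps)
  show "PiM2 Y ** cmat Jmat = mat (pft3 Y)"
    unfolding vec_eq_iff all6 matrix_matrix_mult_def mat_def vec_lambda_beta sum6
    by (simp add: PiM2_ent Jc_ent pft3_def)
qed
section \<open>Ring of complex 6x6 matrices\<close>

lemma matrix_add_rdistrib': "((A + B) ** C) = (A ** C) + (B ** C)"
  by (vector matrix_matrix_mult_def sum.distrib[symmetric] field_simps)

typedef cm = "UNIV :: (complex^6^6) set" morphisms M Ab by auto

setup_lifting type_definition_cm

instantiation cm :: ring_1
begin
lift_definition zero_cm :: cm is "0 :: complex^6^6" .
lift_definition one_cm :: cm is "mat 1 :: complex^6^6" .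
lift_definition plus_cm :: "cm \<Rightarrow> cm \<Rightarrow> cm" is "(+)" .
lift_definition minus_cm :: "cm \<Rightarrow> cm \<Rightarrow> cm" is "(-)" .
lift_definition uminus_cm :: "cm \<Rightarrow> cm" is "uminus" .
lift_definition times_cm :: "cm \<Rightarrow> cm \<Rightarrow> cm" is "(**)" .
instance
proof
  fix a b c :: cm
  show "a * b * c = a * (b * c)" by transfer (simp add: matrix_mul_assoc)
  show "a + b + c = a + (b + c)" by transfer (simp add: add.assoc)
  show "a + b = b + a" by transfer (simp add: add.commute)
  show "0 + a = a" by transfer simp
  show "1 * a = a" by transfer simp
  show "a * 1 = a" by transfer simp
  show "- a + a = 0" by transfer simp
  show "a - b = a + - b" by transfer simp
  show "(a + b) * c = a * c + b * c" by transfer (simp add: matrix_add_rdistrib')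
  show "a * (b + c) = a * b + a * c" by transfer (simp add: matrix_add_ldistrib)
  show "(0::cm) \<noteq> 1" by transfer (simp add: vec_eq_iff mat_def)
qed
end

lemma M_times: "M (a * b) = M a ** M b" by transfer simp
lemma M_plus: "M (a + b) = M a + M b" by transfer simp
lemma M_minus: "M (a - b) = M a - M b" by transfer simp
lemma M_uminus: "M (- a) = - M a" by transfer simp
lemma M_one: "M 1 = mat 1" by transfer simp
lemma M_zero: "M 0 = 0" by transfer simp
lemma M_inj: "M a = M b \<Longrightarrow> a = b" by (simp add: M_inject)

definition sc :: "complex \<Rightarrow> cm" where "sc c = Ab (mat c)"

lemma M_sc: "M (sc c) = mat c" by (simp add: sc_def Ab_inverse)

lemma mat_mul_left: "(mat c :: complex^6^6) ** X = (\<chi> i j. c * X$i$j)"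
  unfolding matrix_matrix_mult_def mat_def
  by (auto simp: vec_eq_iff if_distrib if_distribR sum.delta'[OF finite] sum.delta[OF finite] cong: if_cong)
lemma mat_mul_right: "X ** (mat c :: complex^6^6) = (\<chi> i j. X$i$j * c)"
  unfolding matrix_matrix_mult_def mat_def
  by (auto simp: vec_eq_iff if_distrib if_distribR sum.delta'[OF finite] sum.delta[OF finite] cong: if_cong)

lemma sc_comm: "sc c * x = x * sc c"
  by (rule M_inj) (simp add: M_times M_sc mat_mul_left mat_mul_right mult.commute)
lemma sc_mult: "sc a * sc b = sc (a * b)"
  by (rule M_inj) (simp add: M_times M_sc mat_mul_left, simp add: vec_eq_iff mat_def)
lemma sc_add: "sc a + sc b = sc (a + b)"
  by (rule M_inj) (simp add: M_plus M_sc vec_eq_iff mat_def)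
lemma sc_diff: "sc a - sc b = sc (a - b)"
  by (rule M_inj) (simp add: M_minus M_sc vec_eq_iff mat_def)
lemma sc_one[simp]: "sc 1 = 1"
  by (rule M_inj) (simp add: M_one M_sc)
lemma sc_zero[simp]: "sc 0 = 0"
  by (rule M_inj) (simp add: M_zero M_sc)
lemma sc_assoc: "sc a * (sc b * x) = sc (a * b) * x"
  by (simp add: sc_mult flip: mult.assoc)

lemma sc_left_comm: "x * (sc c * y) = sc c * (x * y)"
  by (metis mult.assoc sc_comm)

lift_definition tr :: "cm \<Rightarrow> cm" is transpose .
lemma tr_mult: "tr (a * b) = tr b * tr a" by transfer (simp add: matrix_transpose_mul)
lemma tr_add: "tr (a + b) = tr a + tr b" by transfer (simp add: transpose_def vec_eq_iff)
lemma tr_diff: "tr (a - b) = tr a - tr b" by transfer (simp add: transpose_def vec_eq_iff)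
lemma tr_neg: "tr (- a) = - tr a" by transfer (simp add: transpose_def vec_eq_iff)
lemma tr_sc: "tr (sc c) = sc c" unfolding sc_def by transfer simp
lemma tr_one: "tr 1 = 1" using tr_sc[of 1] by simp
lemma tr_tr: "tr (tr a) = a" by transfer simp
lemma tr_zero: "tr 0 = 0" by transfer (simp add: transpose_def vec_eq_iff)
lemma M_tr: "M (tr a) = transpose (M a)" by transfer simp

section \<open>Polynomial evaluation in cm\<close>


definition pe :: "complex poly \<Rightarrow> cm \<Rightarrow> cm" where
  "pe p x = (\<Sum>k\<le>degree p. sc (coeff p k) * x ^ k)"

lemma pe_bound: "degree p \<le> n \<Longrightarrow> pe p x = (\<Sum>k\<le>n. sc (coeff p k) * x ^ k)"
proof -
  assume "degree p \<le> n"
  hence "{..n} = {..degree p} \<union> {degree p<..n}" by auto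
  moreover have "(\<Sum>k\<in>{degree p<..n}. sc (coeff p k) * x ^ k) = 0"
    by (intro sum.neutral) (auto simp: coeff_eq_0)
  moreover have "(\<Sum>k\<in>{..degree p} \<union> {degree p<..n}. sc (coeff p k) * x ^ k)
     = (\<Sum>k\<in>{..degree p}. sc (coeff p k) * x ^ k) + (\<Sum>k\<in>{degree p<..n}. sc (coeff p k) * x ^ k)"
    by (rule sum.union_disjoint) auto
  ultimately show ?thesis unfolding pe_def by simp
qed

lemma pe_0[simp]: "pe 0 x = 0" by (simp add: pe_def)

lemma pe_add: "pe (p + q) x = pe p x + pe q x"
proof -
  let ?n = "max (degree p) (degree q)"
  have "pe (p+q) x = (\<Sum>k\<le>?n. sc (coeff (p+q) k) * x ^ k)"
    by (rule pe_bound) (simp add: degree_add_le)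
  also have "\<dots> = (\<Sum>k\<le>?n. sc (coeff p k) * x ^ k) + (\<Sum>k\<le>?n. sc (coeff q k) * x ^ k)"
    by (simp add: sum.distrib sc_add[symmetric] distrib_right)
  also have "\<dots> = pe p x + pe q x" using pe_bound[of p ?n x] pe_bound[of q ?n x] by simp
  finally show ?thesis .
qed

lemma pe_smult: "pe (smult c p) x = sc c * pe p x"
proof -
  have "pe (smult c p) x = (\<Sum>k\<le>degree p. sc (coeff (smult c p) k) * x ^ k)"
    by (rule pe_bound) (simp add: degree_smult_le)
  also have "\<dots> = sc c * pe p x"
    by (simp add: pe_def sum_distrib_left sc_mult[symmetric] mult.assoc)
  finally show ?thesis .
qed

lemma pe_pCons: "pe (pCons c p) x = sc c + x * pe p x"
proof -
  have "pe (pCons c p) x = (\<Sum>k\<le>Suc (degree p). sc (coeff (pCons c p) k) * x ^ k)"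
    by (rule pe_bound) (simp add: degree_pCons_le)
  also have "\<dots> = sc c + (\<Sum>k\<le>degree p. sc (coeff p k) * x ^ Suc k)"
    unfolding sum.atMost_Suc_shift by simp
  also have "(\<Sum>k\<le>degree p. sc (coeff p k) * x ^ Suc k) = x * pe p x"
    by (simp add: pe_def sum_distrib_left sc_left_comm)
  finally show ?thesis .
qed

lemma pe_comm: "pe p x * x = x * pe p x"
  by (simp add: pe_def sum_distrib_left sum_distrib_right mult.assoc sc_left_comm
       power_commutes flip: power_Suc)

lemma pe_mult: "pe (p * q) x = pe p x * pe q x"
proof (induction p)
  case 0 thus ?case by simp
next
  case (pCons c p)
  have "pe (pCons c p * q) x = sc c * pe q x + x * (pe p x * pe q x)"
    by (simp add: pe_add pe_smult pe_pCons pCons.IH)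
  thus ?case by (simp add: pe_pCons distrib_right mult.assoc)
qed

lemma pe_const: "pe [:c:] x = sc c" by (simp add: pe_pCons)
lemma pe_one: "pe 1 x = 1" using pe_const[of 1 x] by (simp add: one_pCons)
lemma pe_diff: "pe (p - q) x = pe p x - pe q x"
  using pe_add[of "p - q" q x] by simp

lemma vdm:
  fixes r0 r1 r2 l1 l2 l3 :: complex
  assumes "l1 \<noteq> l2" "l1 \<noteq> l3" "l2 \<noteq> l3"
    and "r0 + r1 * l1 + r2 * l1^2 = 0" "r0 + r1 * l2 + r2 * l2^2 = 0" "r0 + r1 * l3 + r2 * l3^2 = 0"
  shows "r0 = 0 \<and> r1 = 0 \<and> r2 = 0"
proof -
  have e1: "(l1 - l2) * (r1 + r2 * (l1 + l2)) = 0" using assms(4,5) by algebra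
  have e2: "(l1 - l3) * (r1 + r2 * (l1 + l3)) = 0" using assms(4,6) by algebra
  have f1: "r1 + r2 * (l1 + l2) = 0" using e1 assms(1) by simp
  have f2: "r1 + r2 * (l1 + l3) = 0" using e2 assms(2) by simp
  have "(l2 - l3) * r2 = 0" using f1 f2 by algebra
  hence r2: "r2 = 0" using assms(3) by simp
  hence r1: "r1 = 0" using f1 by simp
  show ?thesis using r1 r2 assms(4) by simp
qed

lemmas scs = sc_assoc sc_mult

lemma tele1:
  fixes P0 P1 P2 j a :: cm
  assumes h0: "-(P0*(j*a)) = sc t0" and h1: "P0*j - P1*(j*a) = sc t1"
    and h2: "P1*j - P2*(j*a) = sc t2" and h3: "P2*j = sc t3"
  shows "sc t0 + sc t1 * a + sc t2 * (a*a) + sc t3 * (a*a*a) = 0"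
  unfolding h0[symmetric] h1[symmetric] h2[symmetric] h3[symmetric]
  by (simp add: algebra_simps)

lemma tele2:
  fixes P0 P1 P2 j a :: cm
  assumes h0: "-(P0*(j*a)) = sc t0" and h1: "P0*j - P1*(j*a) = sc t1"
    and h2: "P1*j - P2*(j*a) = sc t2" and h3: "P2*j = sc t3"
  shows "(sc (z*z) * (P2*j) + sc z * (P1*j) + P0*j) * (sc z - a) = sc (t0 + t1*z + t2*(z*z) + t3*(z*z*z))"
proof -
  have "sc (t0 + t1*z + t2*(z*z) + t3*(z*z*z)) = sc t0 + sc z * sc t1 + sc (z*z) * sc t2 + sc (z*z*z) * sc t3"
    by (simp add: sc_mult sc_add mult.commute)
  also have "\<dots> = -(P0*(j*a)) + sc z * (P0*j - P1*(j*a)) + sc (z*z) * (P1*j - P2*(j*a)) + sc (z*z*z) * (P2*j)"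
    by (simp add: h0 h1 h2 h3)
  also have "\<dots> = sc z * (sc (z*z) * (P2*j) + sc z * (P1*j) + P0*j) - (sc (z*z) * (P2*j) + sc z * (P1*j) + P0*j) * a"
    by (simp add: algebra_simps scs)
  also have "\<dots> = (sc (z*z) * (P2*j) + sc z * (P1*j) + P0*j) * (sc z - a)"
    by (metis right_diff_distrib sc_comm)
  finally show ?thesis by simp
qed

section \<open>Complexification and the structure of A\<close>

lemma cmat_mult: "cmat (X ** Y) = cmat X ** cmat Y"
  by (simp add: cmat_def matrix_matrix_mult_def vec_eq_iff of_real_sum)
lemma cmat_transpose: "cmat (transpose X) = transpose (cmat X)"
  by (simp add: cmat_def transpose_def vec_eq_iff)
lemma cmat_diff: "cmat (X - Y) = cmat X - cmat Y"
  by (simp add: cmat_def vec_eq_iff)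
lemma cmat_uminus: "cmat (- X) = - cmat X"
  by (simp add: cmat_def vec_eq_iff)
lemma cmat_mat: "cmat (mat r) = mat (of_real r)"
  by (simp add: cmat_def mat_def vec_eq_iff)

lemma Ab_mult: "Ab (X ** Y) = Ab X * Ab Y"
  by (rule M_inj) (simp add: M_times Ab_inverse)
lemma Ab_add: "Ab (X + Y) = Ab X + Ab Y"
  by (rule M_inj) (simp add: M_plus Ab_inverse)
lemma Ab_diff: "Ab (X - Y) = Ab X - Ab Y"
  by (rule M_inj) (simp add: M_minus Ab_inverse)
lemma Ab_uminus: "Ab (- X) = - Ab X"
  by (rule M_inj) (simp add: M_uminus Ab_inverse)
lemma Ab_mat: "Ab (mat c) = sc c" by (simp add: sc_def)
lemma Ab_one: "Ab (mat 1) = 1" by (simp add: Ab_mat)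
lemma tr_Ab: "tr (Ab X) = Ab (transpose X)"
  by (rule M_inj) (simp add: M_tr Ab_inverse)
lemma sc_neg: "sc (- c) = - sc c"
  by (rule M_inj) (simp add: M_sc M_uminus vec_eq_iff mat_def)

lemma J_sq: "Jmat ** Jmat = - mat 1"
  by (simp add: vec_eq_iff all6 matrix_matrix_mult_def sum6 Jmat_def mat_def)
lemma J_tr: "transpose Jmat = - Jmat"
  by (simp add: vec_eq_iff all6 transpose_def Jmat_def)

lemma pe_pCons_right: "pe (pCons c p) x = sc c + pe p x * x"
  by (simp add: pe_pCons pe_comm)

lemma pe_intertwine:
  assumes h: "tr x * j = j * x"
  shows "tr (pe p x) * j = j * pe p x"
proof (induction p)
  case 0 thus ?case by (simp add: tr_zero)
next
  case (pCons c p)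
  have "tr (pe (pCons c p) x) * j = sc c * j + tr x * (tr (pe p x) * j)"
    by (simp add: pe_pCons_right tr_add tr_mult tr_sc distrib_right mult.assoc)
  also have "\<dots> = sc c * j + (tr x * j) * pe p x" by (simp add: pCons.IH mult.assoc)
  also have "\<dots> = j * sc c + j * (pe p x * x)" by (simp add: h mult.assoc pe_comm sc_comm)
  also have "\<dots> = j * pe (pCons c p) x" by (simp add: pe_pCons_right distrib_left)
  finally show ?case .
qed

lemma pe_intertwine2:
  assumes h: "x * s = s * tr x"
  shows "pe p x * s = s * tr (pe p x)"
proof (induction p)
  case 0 thus ?case by (simp add: tr_zero)
next
  case (pCons c p)
  have "pe (pCons c p) x * s = sc c * s + pe p x * (x * s)"
    by (simp add: pe_pCons_right distrib_right mult.assoc)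
  also have "\<dots> = sc c * s + (pe p x * s) * tr x" by (simp add: h mult.assoc)
  also have "\<dots> = s * sc c + s * (tr x * tr (pe p x))"
    by (simp add: pCons.IH mult.assoc sc_comm pe_comm tr_mult[symmetric])
  also have "\<dots> = s * tr (pe (pCons c p) x)" by (simp add: pe_pCons_right tr_add tr_mult tr_sc distrib_left)
  finally show ?case .
qed

lemma matrix_mult_uminus_right: "X ** (- Z) = - (X ** (Z :: 'a::ring_1^_^_))"
  by (simp add: matrix_matrix_mult_def vec_eq_iff sum_negf)

lemma A_struct:
  fixes A :: "real^6^6" and lam al be ga :: "nat \<Rightarrow> complex" and Bm :: "nat \<Rightarrow> complex^6^6"
  assumes skewHam: "transpose A ** Jmat = Jmat ** A"
    and distinct: "lam 1 \<noteq> lam 2" "lam 1 \<noteq> lam 3" "lam 2 \<noteq> lam 3"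
    and charpoly: "\<And>z::complex. det (mat z - cmat A) = ((z - lam 1) * (z - lam 2) * (z - lam 3))\<^sup>2"
    and interp: "\<And>i k. i \<in> {1,2,3} \<Longrightarrow> k \<in> {1,2,3} \<Longrightarrow>
        al i + be i * lam k + ga i * (lam k)\<^sup>2 = (if k = i then -1 else 1)"
    and B_def: "\<And>i. Bm i = mat (al i) + mat (be i) ** cmat A + mat (ga i) ** (cmat A ** cmat A)"
  shows "\<forall>i\<in>{1,2,3}. Ab (Bm i) * Ab (Bm i) = 1"
    "Ab (Bm 1) + Ab (Bm 2) + Ab (Bm 3) = 1"
    "\<forall>i. tr (Ab (Bm i)) * Ab (cmat Jmat) = Ab (cmat Jmat) * Ab (Bm i)"
    "\<forall>S. A ** S = S ** transpose A \<longrightarrow> (\<forall>i. Ab (Bm i) * Ab (cmat S) = Ab (cmat S) * tr (Ab (Bm i)))"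
proof -
  define aa where "aa = Ab (cmat A)"
  define jj where "jj = Ab (cmat Jmat)"
  have trA: "tr aa * jj = jj * aa"
  proof -
    have "Ab (cmat (transpose A ** Jmat)) = Ab (cmat (Jmat ** A))" using skewHam by simp
    thus ?thesis by (simp add: aa_def jj_def cmat_mult cmat_transpose Ab_mult tr_Ab)
  qed
  have bpe: "\<And>i. Ab (Bm i) = pe [:al i, be i, ga i:] aa"
    by (simp add: B_def aa_def Ab_add Ab_mult Ab_mat pe_pCons_right algebra_simps)
  show "\<forall>i. tr (Ab (Bm i)) * Ab (cmat Jmat) = Ab (cmat Jmat) * Ab (Bm i)"
    using pe_intertwine[OF trA] by (simp add: bpe jj_def)
  show "\<forall>S. A ** S = S ** transpose A \<longrightarrow> (\<forall>i. Ab (Bm i) * Ab (cmat S) = Ab (cmat S) * tr (Ab (Bm i)))"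
  proof (intro allI impI)
    fix S i assume hS: "A ** S = S ** transpose A"
    have "Ab (cmat (A ** S)) = Ab (cmat (S ** transpose A))" using hS by simp
    hence "aa * Ab (cmat S) = Ab (cmat S) * tr aa"
      by (simp add: aa_def cmat_mult cmat_transpose Ab_mult tr_Ab)
    from pe_intertwine2[OF this] show "Ab (Bm i) * Ab (cmat S) = Ab (cmat S) * tr (Ab (Bm i))"
      by (simp add: bpe)
  qed
  \<comment> \<open>Pfaffian argument\<close>
  define Y where "Y = cmat (Jmat ** A)"
  have trY: "transpose Y = - Y"
  proof -
    have "transpose (Jmat ** A) = - (Jmat ** A)"
      by (simp add: matrix_transpose_mul J_tr matrix_mult_uminus_right skewHam)
    thus ?thesis by (simp add: Y_def flip: cmat_transpose cmat_uminus)
  qed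
  have antisym: "\<And>a b. Y$b$a = - Y$a$b"
  proof -
    fix a b
    have "transpose Y $ a $ b = (- Y) $ a $ b" using trY by simp
    thus "Y$b$a = - Y$a$b" by (simp add: transpose_def)
  qed
  note pf = pf_ids[OF antisym]
  define P0 where "P0 = Ab (PiM0 Y)"
  define P1 where "P1 = Ab (PiM1 Y)"
  define P2 where "P2 = Ab (PiM2 Y)"
  define t0 where "t0 = pft0 Y"
  define t1 where "t1 = pft1 Y"
  define t2 where "t2 = pft2 Y"
  define t3 where "t3 = pft3 Y"
  have yA: "Ab Y = jj * aa" by (simp add: Y_def cmat_mult Ab_mult aa_def jj_def)
  have h0: "-(P0*(jj*aa)) = sc t0"
    using arg_cong[OF pf(1), of Ab] by (simp add: Ab_uminus Ab_mult Ab_mat yA P0_def t0_def)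
  have h1: "P0*jj - P1*(jj*aa) = sc t1"
    using arg_cong[OF pf(2), of Ab] by (simp add: Ab_diff Ab_mult Ab_mat yA P0_def P1_def t1_def jj_def)
  have h2: "P1*jj - P2*(jj*aa) = sc t2"
    using arg_cong[OF pf(3), of Ab] by (simp add: Ab_diff Ab_mult Ab_mat yA P2_def P1_def t2_def jj_def)
  have h3: "P2*jj = sc t3"
    using arg_cong[OF pf(4), of Ab] by (simp add: Ab_mult Ab_mat P2_def t3_def jj_def)
  have T1: "sc t0 + sc t1 * aa + sc t2 * (aa*aa) + sc t3 * (aa*aa*aa) = 0"
    by (rule tele1[OF h0 h1 h2 h3])
  have t3v: "t3 = -1" by (simp add: t3_def pft3_def)
  have root: "t0 + t1 * lam k + t2 * (lam k * lam k) + t3 * (lam k * lam k * lam k) = 0"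
    if k: "k \<in> {1,2,3}" for k
  proof (rule ccontr)
    let ?z = "lam k"
    let ?p = "t0 + t1 * ?z + t2 * (?z * ?z) + t3 * (?z * ?z * ?z)"
    assume np: "?p \<noteq> 0"
    let ?R = "sc (?z*?z) * (P2*jj) + sc ?z * (P1*jj) + P0*jj"
    have "?R * (sc ?z - aa) = sc ?p" by (rule tele2[OF h0 h1 h2 h3])
    define X where "X = sc (1 / ?p) * ?R"
    have E: "X * (sc ?z - aa) = 1" unfolding X_def
      using np \<open>?R * (sc ?z - aa) = sc ?p\<close> by (simp add: mult.assoc sc_mult)
    have "M (X * (sc ?z - aa)) = mat 1" using E by (simp add: M_one)
    hence "M X ** (mat ?z - cmat A) = mat 1" by (simp add: M_times M_minus M_sc aa_def Ab_inverse)
    hence "invertible (mat ?z - cmat A)" using invertible_left_inverse by blast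
    hence "det (mat ?z - cmat A) \<noteq> 0" by (simp add: invertible_det_nz)
    moreover have "det (mat ?z - cmat A) = 0" using k by (auto simp: charpoly)
    ultimately show False by simp
  qed
  define s1 where "s1 = lam 1 + lam 2 + lam 3"
  define s2 where "s2 = lam 1 * lam 2 + lam 1 * lam 3 + lam 2 * lam 3"
  define s3 where "s3 = lam 1 * lam 2 * lam 3"
  have mroot: "lam k * lam k * lam k - s1 * (lam k * lam k) + s2 * lam k - s3 = 0" if "k \<in> {1,2,3}" for k
  proof -
    have "(lam k - lam 1) * (lam k - lam 2) * (lam k - lam 3) = 0" using that by auto
    thus ?thesis unfolding s1_def s2_def s3_def by algebra
  qed
  have vt: "(t0 + t3 * s3) + (t1 - t3 * s2) * lam k + (t2 + t3 * s1) * (lam k)^2 = 0" if "k \<in> {1,2,3}" for k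
    using root[OF that] mroot[OF that] by algebra
  have tco: "t0 + t3 * s3 = 0 \<and> t1 - t3 * s2 = 0 \<and> t2 + t3 * s1 = 0"
    by (rule vdm[OF distinct vt vt vt]) auto
  define mp where "mp = [:- s3, s2, - s1, 1:]"
  have mA: "pe mp aa = 0"
  proof -
    have t0v: "t0 = s3" using tco t3v by algebra
    have t1v: "t1 = - s2" using tco t3v by algebra
    have t2v: "t2 = s1" using tco t3v by algebra
    have "pe mp aa = - (sc t0 + sc t1 * aa + sc t2 * (aa*aa) + sc t3 * (aa*aa*aa))"
      by (simp add: t0v t1v t2v t3v mp_def pe_pCons_right sc_neg algebra_simps)
    thus ?thesis using T1 by simp
  qed
  show "\<forall>i\<in>{1,2,3}. Ab (Bm i) * Ab (Bm i) = 1"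
  proof
    fix i :: nat assume i: "i \<in> {1,2,3}"
    define p where "p = [:al i, be i, ga i:]"
    define q1 where "q1 = ga i * ga i"
    define q0 where "q0 = 2 * be i * ga i + s1 * ga i * ga i"
    define r0 where "r0 = al i * al i - 1 + s3 * q0"
    define r1 where "r1 = 2 * al i * be i - s2 * q0 + s3 * q1"
    define r2 where "r2 = be i * be i + 2 * al i * ga i + s1 * q0 - s2 * q1"
    have vr: "r0 + r1 * lam k + r2 * (lam k)^2 = 0" if k: "k \<in> {1,2,3}" for k
    proof -
      have "(al i + be i * lam k + ga i * (lam k)\<^sup>2)^2 = 1" using interp[OF i k] by simp
      thus ?thesis using mroot[OF k] unfolding r0_def r1_def r2_def q0_def q1_def by algebra
    qed
    have rz: "r0 = 0 \<and> r1 = 0 \<and> r2 = 0" by (rule vdm[OF distinct vr vr vr]) auto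
    have pp: "p * p = 1 + mp * [:q0, q1:]"
    proof (rule poly_eq_poly_eq_iff[THEN iffD1], rule ext)
      fix z
      show "poly (p * p) z = poly (1 + mp * [:q0, q1:]) z"
        using rz unfolding p_def mp_def r0_def r1_def r2_def q0_def q1_def
        by (simp add: algebra_simps) algebra
    qed
    have "Ab (Bm i) * Ab (Bm i) = pe (p * p) aa" by (simp only: bpe p_def pe_mult)
    also have "\<dots> = 1" by (simp only: pp pe_add pe_mult mA pe_one mult_zero_left add_0_right)
    finally show "Ab (Bm i) * Ab (Bm i) = 1" .
  qed
  define c0 where "c0 = al 1 + al 2 + al 3 - 1"
  define c1 where "c1 = be 1 + be 2 + be 3"
  define c2 where "c2 = ga 1 + ga 2 + ga 3"
  have vc: "c0 + c1 * lam k + c2 * (lam k)^2 = 0" if k: "k \<in> {1,2,3}" for k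
  proof -
    have "(al 1 + be 1 * lam k + ga 1 * (lam k)\<^sup>2) + (al 2 + be 2 * lam k + ga 2 * (lam k)\<^sup>2)
       + (al 3 + be 3 * lam k + ga 3 * (lam k)\<^sup>2) = 1"
      using interp[of 1 k] interp[of 2 k] interp[of 3 k] k by auto
    thus ?thesis unfolding c0_def c1_def c2_def by algebra
  qed
  have cz: "c0 = 0 \<and> c1 = 0 \<and> c2 = 0" by (rule vdm[OF distinct vc vc vc]) auto
  have "[:al 1, be 1, ga 1:] + [:al 2, be 2, ga 2:] + [:al 3, be 3, ga 3:] = 1"
    using cz unfolding c0_def c1_def c2_def by (simp add: one_pCons add_eq_0_iff2 algebra_simps)
  hence "pe ([:al 1, be 1, ga 1:] + [:al 2, be 2, ga 2:] + [:al 3, be 3, ga 3:]) aa = 1"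
    by (simp only: pe_one)
  thus "Ab (Bm 1) + Ab (Bm 2) + Ab (Bm 3) = 1" by (simp only: bpe pe_add)
qed

lemma inv_comm: "u * v = (1::cm) \<Longrightarrow> v * u = 1"
proof -
  assume "u * v = 1"
  hence "M u ** M v = mat 1" by (metis M_times M_one)
  hence "M v ** M u = mat 1" using matrix_left_right_inverse by blast
  thus "v * u = 1" by (metis M_inj M_times M_one)
qed

lemma final_alg:
  fixes j s e :: cm and c x :: "nat \<Rightarrow> cm" and \<epsilon> :: complex
  assumes jj: "j*j = -1" and trj: "tr j = -j" and trs: "tr s = s"
    and cc: "\<And>i. i\<in>{1,2,3} \<Longrightarrow> c i * c i = 1"
    and csum: "c 1 + c 2 + c 3 = 1"
    and cmm: "\<And>i. i\<in>{1,2,3} \<Longrightarrow> c i * (j * s) = (j * s) * c i"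
    and einv: "(1 - sc \<epsilon> * (j * s)) * e = 1"
    and xinv: "\<And>i. i\<in>{1,2,3} \<Longrightarrow> (1 - sc \<epsilon> * (c i * (j * s))) * x i = 1"
  shows "\<exists>w. x 1 + x 2 + x 3 = e + w \<and> tr (j*w) = -(j*w)"
proof -
  define mm where "mm = j * s"
  have e2: "e * (1 - sc \<epsilon> * mm) = 1" using inv_comm einv by (simp add: mm_def)
  define q where "q i = sc (1/2) * (1 - c i)" for i
  have half: "sc (1/2) + sc (1/2) = 1" by (simp add: sc_add)
  have qc: "q i * c i = - q i" if i: "i\<in>{1,2,3}" for i
  proof -
    have "q i * c i = sc (1/2) * (c i - c i * c i)" by (simp add: q_def algebra_simps)
    also have "\<dots> = - q i" by (simp add: cc[OF i] q_def algebra_simps)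
    finally show ?thesis .
  qed
  have qq: "q i + q i = 1 - c i" for i
  proof -
    have "q i + q i = (sc (1/2) + sc (1/2)) * (1 - c i)" by (simp add: q_def distrib_right)
    thus ?thesis by (simp add: half)
  qed
  have qm: "q i * mm = mm * q i" if i: "i\<in>{1,2,3}" for i
  proof -
    have "(1 - c i) * mm = mm * (1 - c i)" using cmm[OF i] by (simp add: algebra_simps mm_def)
    hence "sc (1/2) * ((1 - c i) * mm) = sc (1/2) * (mm * (1 - c i))" by simp
    thus ?thesis by (simp add: q_def mult.assoc sc_comm[of "1/2" mm] flip: mult.assoc)
  qed
  have qsum: "q 1 + q 2 + q 3 = 1"
  proof -
    have "(1 - c 1) + (1 - c 2) + (1 - c 3) = 1 + 1 + 1 - (c 1 + c 2 + c 3)" by (simp add: algebra_simps)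
    also have "\<dots> = 1 + 1" unfolding csum by simp
    finally have "(1 - c 1) + (1 - c 2) + (1 - c 3) = 1 + 1" .
    hence "q 1 + q 2 + q 3 = sc (1/2) * (1 + 1)" by (simp add: q_def flip: distrib_left)
    also have "\<dots> = 1" by (simp only: distrib_left mult_1_right half)
    finally show ?thesis .
  qed
  have scq: "sc \<epsilon> * q i = q i * sc \<epsilon>" for i by (rule sc_comm)
  have k1: "(1 + sc \<epsilon> * mm) * (q i * x i) = q i" if i: "i\<in>{1,2,3}" for i
  proof -
    have "(1 + sc \<epsilon> * mm) * q i = q i + sc \<epsilon> * (mm * q i)" by (simp add: algebra_simps)
    also have "\<dots> = q i + sc \<epsilon> * (q i * mm)" by (simp add: qm[OF i])
    also have "\<dots> = q i - q i * (sc \<epsilon> * (c i * mm))"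
    proof -
      have "q i * (sc \<epsilon> * (c i * mm)) = sc \<epsilon> * ((q i * c i) * mm)"
        by (simp only: sc_left_comm mult.assoc)
      also have "\<dots> = - (sc \<epsilon> * (q i * mm))" by (simp add: qc[OF i])
      finally show ?thesis by simp
    qed
    also have "\<dots> = q i * (1 - sc \<epsilon> * (c i * mm))" by (simp add: algebra_simps)
    finally have "(1 + sc \<epsilon> * mm) * (q i * x i) = q i * ((1 - sc \<epsilon> * (c i * mm)) * x i)"
      by (simp add: mult.assoc flip: mult.assoc)
    thus ?thesis using xinv[OF i] by (simp add: mm_def)
  qed
  define ob where "ob = q 1 * x 1 + q 2 * x 2 + q 3 * x 3"
  have o1: "(1 + sc \<epsilon> * mm) * ob = 1"
    using k1[of 1] k1[of 2] k1[of 3] qsum by (simp add: ob_def distrib_left)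
  have o2: "ob * (1 + sc \<epsilon> * mm) = 1" using inv_comm[OF o1] .
  have k2: "(1 - q i) * x i = e * (1 - q i)" if i: "i\<in>{1,2,3}" for i
  proof -
    have qc2: "(1 - q i) * c i = 1 - q i"
      using qc[OF i] qq[of i] by (simp add: algebra_simps)
    have a: "(1 - sc \<epsilon> * mm) * (1 - q i) = (1 - q i) * (1 - sc \<epsilon> * (c i * mm))"
    proof -
      have "(1 - q i) * (sc \<epsilon> * (c i * mm)) = sc \<epsilon> * (((1 - q i) * c i) * mm)"
        by (simp only: sc_left_comm mult.assoc)
      also have "\<dots> = sc \<epsilon> * ((1 - q i) * mm)" by (simp add: qc2)
      also have "\<dots> = sc \<epsilon> * (mm * (1 - q i))" by (simp add: algebra_simps qm[OF i])
      finally show ?thesis by (simp add: algebra_simps)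
    qed
    have "(1 - q i) * x i = e * ((1 - sc \<epsilon> * mm) * (1 - q i)) * x i" using e2 by (simp flip: mult.assoc)
    also have "\<dots> = e * (1 - q i) * ((1 - sc \<epsilon> * (c i * mm)) * x i)" by (simp add: a mult.assoc)
    also have "\<dots> = e * (1 - q i)" using xinv[OF i] by (simp add: mm_def)
    finally show ?thesis .
  qed
  have k3: "q i * x i = ob * q i" if i: "i\<in>{1,2,3}" for i
  proof -
    have "q i * x i = ob * ((1 + sc \<epsilon> * mm) * (q i * x i))" using o2 by (simp flip: mult.assoc)
    thus ?thesis by (simp add: k1[OF i])
  qed
  have sx: "x 1 + x 2 + x 3 = e + (e + ob)"
  proof -
    have xi: "x i = e * (1 - q i) + ob * q i" if "i\<in>{1,2,3}" for i
      using k2[OF that] k3[OF that] by (metis add.commute diff_add_cancel distrib_right mult_1_left)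
    have X0: "x 1 + x 2 + x 3 = (e * (1 - q 1) + e * (1 - q 2) + e * (1 - q 3)) + ob * (q 1 + q 2 + q 3)"
    proof -
      have x1: "x 1 = e * (1 - q 1) + ob * q 1" by (rule xi) simp
      have x2: "x 2 = e * (1 - q 2) + ob * q 2" by (rule xi) simp
      have x3: "x 3 = e * (1 - q 3) + ob * q 3" by (rule xi) simp
      show ?thesis unfolding x1 x2 x3 by (simp add: algebra_simps)
    qed
    have "(1 - q 1) + (1 - q 2) + (1 - q 3) = 1 + 1 + 1 - (q 1 + q 2 + q 3)" by (simp add: algebra_simps)
    also have "\<dots> = 1 + 1" unfolding qsum by simp
    finally have Y: "(1 - q 1) + (1 - q 2) + (1 - q 3) = 1 + 1" .
    have X: "x 1 + x 2 + x 3 = e * ((1 - q 1) + (1 - q 2) + (1 - q 3)) + ob * (q 1 + q 2 + q 3)"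
      unfolding X0 by (simp only: distrib_left)
    show ?thesis unfolding X Y qsum by (simp only: distrib_left mult_1_right add.assoc)
  qed
  define v where "v = e * ob"
  have eo: "e + ob = v + v"
  proof -
    have "e = e * ((1 + sc \<epsilon> * mm) * ob)" by (simp add: o1)
    moreover have "ob = (e * (1 - sc \<epsilon> * mm)) * ob" by (simp add: e2)
    ultimately have "e + ob = e * ((1 + sc \<epsilon> * mm) + (1 - sc \<epsilon> * mm)) * ob"
      by (metis distrib_left distrib_right mult.assoc)
    moreover have "(1 + sc \<epsilon> * mm) + (1 - sc \<epsilon> * mm) = 1 + 1" by simp
    ultimately have "e + ob = e * (1 + 1) * ob" by simp
    thus ?thesis by (simp only: v_def distrib_left distrib_right mult_1_right mult_1_left)
  qed
  define u where "u = (1 + sc \<epsilon> * mm) * (1 - sc \<epsilon> * mm)"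
  have uv: "u * v = 1"
  proof -
    have "u * v = (1 + sc \<epsilon> * mm) * (((1 - sc \<epsilon> * mm) * e) * ob)" by (simp add: u_def v_def mult.assoc)
    thus ?thesis using einv o1 by (simp add: mm_def)
  qed
  have trmm: "tr mm * j = - (j * mm)"
  proof -
    have "tr mm * j = - (s * (j * j))" by (simp add: mm_def tr_mult trs trj mult.assoc)
    also have "\<dots> = - (j * mm)" by (simp add: jj mm_def flip: mult.assoc)
    finally show ?thesis .
  qed
  have tru: "tr u * j = j * u"
  proof -
    have t1: "(1 + sc \<epsilon> * tr mm) * j = j * (1 - sc \<epsilon> * mm)"
    proof -
      have "(1 + sc \<epsilon> * tr mm) * j = j + sc \<epsilon> * (tr mm * j)" by (simp add: algebra_simps)
      also have "\<dots> = j - sc \<epsilon> * (j * mm)" by (simp add: trmm)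
      also have "\<dots> = j * (1 - sc \<epsilon> * mm)" by (simp add: algebra_simps sc_comm[of \<epsilon> j] flip: mult.assoc)
      finally show ?thesis .
    qed
    have t2: "(1 - sc \<epsilon> * tr mm) * j = j * (1 + sc \<epsilon> * mm)"
    proof -
      have "(1 - sc \<epsilon> * tr mm) * j = j - sc \<epsilon> * (tr mm * j)" by (simp add: algebra_simps)
      also have "\<dots> = j + sc \<epsilon> * (j * mm)" by (simp add: trmm)
      also have "\<dots> = j * (1 + sc \<epsilon> * mm)" by (simp add: algebra_simps sc_comm[of \<epsilon> j] flip: mult.assoc)
      finally show ?thesis .
    qed
    have "tr u = (1 - sc \<epsilon> * tr mm) * (1 + sc \<epsilon> * tr mm)"
      by (simp add: u_def tr_mult tr_add tr_diff tr_one tr_sc sc_comm[of \<epsilon> "tr mm"])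
    hence "tr u * j = (1 - sc \<epsilon> * tr mm) * ((1 + sc \<epsilon> * tr mm) * j)" by (simp add: mult.assoc)
    also have "\<dots> = ((1 - sc \<epsilon> * tr mm) * j) * (1 - sc \<epsilon> * mm)" by (simp add: t1 mult.assoc)
    also have "\<dots> = j * u" by (simp add: t2 u_def mult.assoc)
    finally show ?thesis .
  qed
  have trvu: "tr v * tr u = 1" using arg_cong[OF uv, of tr] by (simp add: tr_mult tr_one)
  have trvj: "tr v * j = j * v"
  proof -
    have "tr v * j = tr v * j * (u * v)" by (simp add: uv)
    also have "\<dots> = (tr v * (j * u)) * v" by (simp add: mult.assoc)
    also have "\<dots> = (tr v * tr u) * j * v" by (simp add: tru mult.assoc flip: tru)
    also have "\<dots> = j * v" by (simp add: trvu)
    finally show ?thesis .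
  qed
  have "tr (j * (e + ob)) = - (j * (e + ob))"
    by (simp add: eo tr_mult tr_add trj trvj distrib_left)
  thus ?thesis using sx by blast
qed

section \<open>Derivatives of the cubic\<close>

lemma d_nth: "((\<lambda>y::real^'n. y$i) has_derivative (\<lambda>h. h$i)) F"
  by (rule bounded_linear.has_derivative[OF bounded_linear_vec_nth has_derivative_ident])

lemma d_mono: "((\<lambda>y::real^'n. c * y$i * y$j * y$k) has_derivative
   (\<lambda>h. c * (h$i * y$j * y$k + y$i * h$j * y$k + y$i * y$j * h$k))) (at y)"
  apply (rule has_derivative_eq_rhs)
   apply (rule has_derivative_mult has_derivative_const d_nth)+
  apply (simp add: fun_eq_iff algebra_simps)
  done

definition Gc :: "(6 \<Rightarrow> 6 \<Rightarrow> 6 \<Rightarrow> real) \<Rightarrow> real^6 \<Rightarrow> real^6" where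
  "Gc c y = (\<Sum>i\<in>UNIV. \<Sum>j\<in>UNIV. \<Sum>k\<in>UNIV.
      (c i j k * (y$j * y$k)) *\<^sub>R axis i 1 + (c i j k * (y$i * y$k)) *\<^sub>R axis j 1
      + (c i j k * (y$i * y$j)) *\<^sub>R axis k 1)"

definition DGc :: "(6 \<Rightarrow> 6 \<Rightarrow> 6 \<Rightarrow> real) \<Rightarrow> real^6 \<Rightarrow> real^6 \<Rightarrow> real^6" where
  "DGc c y h = (\<Sum>i\<in>UNIV. \<Sum>j\<in>UNIV. \<Sum>k\<in>UNIV.
      (c i j k * (h$j * y$k + y$j * h$k)) *\<^sub>R axis i 1 + (c i j k * (h$i * y$k + y$i * h$k)) *\<^sub>R axis j 1
      + (c i j k * (h$i * y$j + y$i * h$j)) *\<^sub>R axis k 1)"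

lemma d_quad: "((\<lambda>y::real^'n. (c * (y$j * y$k)) *\<^sub>R (v::real^'m)) has_derivative
   (\<lambda>h. (c * (h$j * y$k + y$j * h$k)) *\<^sub>R v)) (at y)"
  apply (rule has_derivative_eq_rhs)
   apply (rule has_derivative_scaleR has_derivative_mult has_derivative_const d_nth)+
  apply (simp add: fun_eq_iff algebra_simps)
  done

lemma DGc_deriv: "(Gc c has_derivative DGc c y) (at y)"
  unfolding Gc_def[abs_def] DGc_def
  by (intro has_derivative_sum has_derivative_add d_quad)

definition dl :: "6 \<Rightarrow> 6 \<Rightarrow> real" where "dl a b = (if a = b then 1 else 0)"
lemma dl_sym: "dl a b = dl b a" by (simp add: dl_def)

lemma axis_ent: "axis i (1::real) $ l = dl l i" by (simp add: axis_def dl_def)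

lemma cubic_derivs:
  fixes H :: "real^6 \<Rightarrow> real" and x :: "real^6"
  assumes cubic: "homog_cubic H"
  shows "\<exists>D. (grad H has_derivative D) (at x) \<and> (\<forall>l m. hesse H x $ l $ m = D (axis m 1) $ l)
            \<and> transpose (hesse H x) = hesse H x"
proof -
  obtain c where c: "\<And>y. H y = (\<Sum>i\<in>UNIV. \<Sum>j\<in>UNIV. \<Sum>k\<in>UNIV. c i j k * y$i * y$j * y$k)"
    using cubic unfolding homog_cubic_def by blast
  have Heq: "H = (\<lambda>y. \<Sum>i\<in>UNIV. \<Sum>j\<in>UNIV. \<Sum>k\<in>UNIV. c i j k * y$i * y$j * y$k)"
    using c by (simp add: fun_eq_iff)
  have DH: "(H has_derivative (\<lambda>h. \<Sum>i\<in>UNIV. \<Sum>j\<in>UNIV. \<Sum>k\<in>UNIV.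
       c i j k * (h$i * y$j * y$k + y$i * h$j * y$k + y$i * y$j * h$k))) (at y)" for y
    unfolding Heq by (intro has_derivative_sum d_mono)
  have gradeq: "grad H = Gc c"
  proof (rule ext)
    fix y
    have "grad H y $ l = Gc c y $ l" for l
    proof -
      have "grad H y $ l = (\<Sum>i\<in>UNIV. \<Sum>j\<in>UNIV. \<Sum>k\<in>UNIV.
         c i j k * ((axis l 1)$i * y$j * y$k + y$i * (axis l 1)$j * y$k + y$i * y$j * (axis l 1)$k))"
        unfolding grad_def frechet_derivative_at[OF DH[of y], symmetric] by simp
      also have "\<dots> = (\<Sum>i\<in>UNIV. \<Sum>j\<in>UNIV. \<Sum>k\<in>UNIV.
         c i j k * (y$j * y$k) * dl l i + c i j k * (y$i * y$k) * dl l j + c i j k * (y$i * y$j) * dl l k)"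
        by (intro sum.cong refl) (simp add: axis_ent dl_sym algebra_simps)
      also have "\<dots> = Gc c y $ l"
        unfolding Gc_def by (simp add: sum_component axis_ent)
      finally show ?thesis .
    qed
    thus "grad H y = Gc c y" by (simp add: vec_eq_iff)
  qed
  have hes: "hesse H x $ l $ m = DGc c x (axis m 1) $ l" for l m
    unfolding hesse_def jacobi_def gradeq
    using frechet_derivative_at[OF DGc_deriv[of c x]] by simp
  have sym: "DGc c x (axis m 1) $ l = DGc c x (axis l 1) $ m" for l m
  proof -
    have "DGc c x (axis m 1) $ l = (\<Sum>i\<in>UNIV. \<Sum>j\<in>UNIV. \<Sum>k\<in>UNIV.
      c i j k * (dl j m * x$k + x$j * dl k m) * dl l i + c i j k * (dl i m * x$k + x$i * dl k m) * dl l j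
      + c i j k * (dl i m * x$j + x$i * dl j m) * dl l k)"
      unfolding DGc_def by (simp add: sum_component axis_ent)
    also have "\<dots> = (\<Sum>i\<in>UNIV. \<Sum>j\<in>UNIV. \<Sum>k\<in>UNIV.
      c i j k * (dl j l * x$k + x$j * dl k l) * dl m i + c i j k * (dl i l * x$k + x$i * dl k l) * dl m j
      + c i j k * (dl i l * x$j + x$i * dl j l) * dl m k)"
      by (intro sum.cong refl) (simp add: dl_sym algebra_simps)
    also have "\<dots> = DGc c x (axis l 1) $ m"
      unfolding DGc_def by (simp add: sum_component axis_ent)
    finally show ?thesis .
  qed
  show ?thesis
    apply (rule exI[of _ "DGc c x"])
    using DGc_deriv[of c x] hes sym
    by (simp add: gradeq vec_eq_iff transpose_def)
qed

lemma cvec_add: "cvec (x + y) = cvec x + cvec y" by (simp add: cvec_def vec_eq_iff)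
lemma cvec_scale: "cvec (r *\<^sub>R x) = r *\<^sub>R cvec x"
proof -
  have "cvec (r *\<^sub>R x) $ i = (r *\<^sub>R cvec x) $ i" for i
  proof -
    have "cvec (r *\<^sub>R x) $ i = complex_of_real (r * x$i)"
      by (simp only: cvec_def vec_lambda_beta vector_scaleR_component real_scaleR_def)
    also have "\<dots> = r *\<^sub>R complex_of_real (x$i)" by (simp only: scaleR_conv_of_real of_real_mult)
    also have "\<dots> = (r *\<^sub>R cvec x) $ i" by (simp only: cvec_def vec_lambda_beta vector_scaleR_component)
    finally show ?thesis .
  qed
  thus ?thesis by (simp only: vec_eq_iff) blast
qed

lemma bl_cvec: "bounded_linear (cvec :: real^'n \<Rightarrow> complex^'n)"
proof -
  have "linear (cvec :: real^'n \<Rightarrow> complex^'n)"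
    by (rule linearI) (rule cvec_add, rule cvec_scale)
  thus ?thesis by (simp add: linear_conv_bounded_linear)
qed

lemma inv_props: "invertible N \<Longrightarrow> N ** matrix_inv N = mat 1 \<and> matrix_inv N ** N = mat 1"
  unfolding invertible_def matrix_inv_def by (rule someI_ex)

lemma qform_real: "complex_of_real (qform N v) = qform (cmat N) (cvec v)"
  by (simp add: qform_def matrix_vector_mult_def cmat_def cvec_def of_real_sum)

lemma qform_add: "qform (A + B) v = qform A v + qform B (v :: 'a::comm_ring_1^'n)"
  by (simp add: qform_def matrix_vector_mult_def sum.distrib distrib_left distrib_right)

lemma qform_antisym:
  assumes "transpose N = - N"
  shows "qform N (v :: complex^'n) = 0"
proof -
  have ent: "N $ j $ i = - N $ i $ j" for i j
  proof -
    have "transpose N $ i $ j = (- N) $ i $ j" using assms by simp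
    thus ?thesis by (simp add: transpose_def)
  qed
  have "qform N v = (\<Sum>i\<in>UNIV. \<Sum>j\<in>UNIV. v$i * N$i$j * v$j)"
    by (simp add: qform_def matrix_vector_mult_def sum_distrib_left mult.assoc)
  also have "\<dots> = (\<Sum>j\<in>UNIV. \<Sum>i\<in>UNIV. v$i * N$i$j * v$j)" by (rule sum.swap)
  also have "\<dots> = (\<Sum>j\<in>UNIV. \<Sum>i\<in>UNIV. - (v$j * N$j$i * v$i))"
  proof -
    have pt: "v$i * N$i$j * v$j = - (v$j * N$j$i * v$i)" for i j
      by (simp only: ent[of i j]) (simp add: algebra_simps)
    show ?thesis by (intro sum.cong refl) (rule pt)
  qed
  also have "\<dots> = - (\<Sum>i\<in>UNIV. \<Sum>j\<in>UNIV. v$i * N$i$j * v$j)" by (simp add: sum_negf)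
  finally have "qform N v = - qform N v"
    by (simp add: qform_def matrix_vector_mult_def sum_distrib_left mult.assoc)
  thus ?thesis by simp
qed


theorem mainTheorem11:
  fixes A :: "real^6^6" and H0 :: "real^6 \<Rightarrow> real"
    and lam :: "nat \<Rightarrow> complex" and al be ga :: "nat \<Rightarrow> complex"
    and Bm :: "nat \<Rightarrow> complex^6^6" and g :: "nat \<Rightarrow> real^6 \<Rightarrow> complex^6"
    and f0 :: "real^6 \<Rightarrow> real^6"
    and x :: "real^6" and \<epsilon> :: real
  assumes skewHam: "transpose A ** Jmat = Jmat ** A"
    and cubic: "homog_cubic H0"
    and hess_comm: "\<And>y. A ** hesse H0 y = hesse H0 y ** transpose A"
    and f0_def: "f0 = (\<lambda>y. Jmat *v grad H0 y)"
    and distinct: "lam 1 \<noteq> lam 2" "lam 1 \<noteq> lam 3" "lam 2 \<noteq> lam 3"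
    and charpoly: "\<And>z::complex. det (mat z - cmat A) = ((z - lam 1) * (z - lam 2) * (z - lam 3))\<^sup>2"
    and interp: "\<And>i k. i \<in> {1,2,3} \<Longrightarrow> k \<in> {1,2,3} \<Longrightarrow>
        al i + be i * lam k + ga i * (lam k)\<^sup>2 = (if k = i then -1 else 1)"
    and B_def: "\<And>i. Bm i = mat (al i) + mat (be i) ** cmat A + mat (ga i) ** (cmat A ** cmat A)"
    and g_def: "\<And>i. g i = (\<lambda>y. transpose (Bm i) *v cvec (f0 y))"
    and eps: "\<epsilon> \<noteq> 0"
    and invH: "invertible (mat 1 - mat \<epsilon> ** jacobi f0 x)"
    and invK: "\<And>i. i \<in> {1,2,3} \<Longrightarrow> invertible (mat 1 - mat (complex_of_real \<epsilon>) ** jacobi (g i) x)"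
  shows "(\<Sum>i\<in>{1,2,3}. qform (cmat Jmat ** matrix_inv (mat 1 - mat (complex_of_real \<epsilon>) ** jacobi (g i) x)) (cvec x)
              / complex_of_real \<epsilon>)
         = complex_of_real (qform (Jmat ** matrix_inv (mat 1 - mat \<epsilon> ** jacobi f0 x)) x / \<epsilon>)"
proof -
  obtain D where D: "(grad H0 has_derivative D) (at x)"
    and hesD: "\<forall>l m. hesse H0 x $ l $ m = D (axis m 1) $ l"
    and hsym: "transpose (hesse H0 x) = hesse H0 x"
    using cubic_derivs[OF cubic, of x] by blast
  have Df0: "(f0 has_derivative (\<lambda>h. Jmat *v D h)) (at x)"
    unfolding f0_def by (rule bounded_linear.has_derivative[OF matrix_vector_mul_bounded_linear D])
  have fdf0: "frechet_derivative f0 (at x) = (\<lambda>h. Jmat *v D h)"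
    by (rule frechet_derivative_at[OF Df0, symmetric])
  have jf0: "jacobi f0 x = Jmat ** hesse H0 x"
    by (simp add: vec_eq_iff jacobi_def fdf0 matrix_vector_mult_def matrix_matrix_mult_def hesD)
  have jg: "jacobi (g i) x = transpose (Bm i) ** cmat (jacobi f0 x)" for i
  proof -
    have Dg: "(g i has_derivative (\<lambda>h. transpose (Bm i) *v cvec (Jmat *v D h))) (at x)"
      unfolding g_def
      by (rule bounded_linear.has_derivative[OF matrix_vector_mul_bounded_linear
                 bounded_linear.has_derivative[OF bl_cvec Df0]])
    have fdg: "frechet_derivative (g i) (at x) = (\<lambda>h. transpose (Bm i) *v cvec (Jmat *v D h))"
      by (rule frechet_derivative_at[OF Dg, symmetric])
    show ?thesis
      by (simp add: vec_eq_iff jacobi_def fdg fdf0 matrix_vector_mult_def matrix_matrix_mult_def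
          cvec_def cmat_def)
  qed
  note AS = A_struct[OF skewHam distinct charpoly interp B_def]
  define e' where "e' = complex_of_real \<epsilon>"
  define jj where "jj = Ab (cmat Jmat)"
  define ss where "ss = Ab (cmat (hesse H0 x))"
  define b where "b i = Ab (Bm i)" for i
  define c where "c i = tr (b i)" for i
  define Nr where "Nr = mat 1 - mat \<epsilon> ** jacobi f0 x"
  define Ni where "Ni i = mat 1 - mat (complex_of_real \<epsilon>) ** jacobi (g i) x" for i
  define e where "e = Ab (cmat (matrix_inv Nr))"
  define xx where "xx i = Ab (matrix_inv (Ni i))" for i
  have mmeq: "Ab (cmat (jacobi f0 x)) = jj * ss"
    by (simp add: jf0 cmat_mult Ab_mult jj_def ss_def)
  have jjsq: "jj * jj = -1"
  proof -
    have "jj * jj = Ab (cmat (Jmat ** Jmat))" by (simp add: jj_def cmat_mult Ab_mult)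
    also have "\<dots> = -1" by (simp add: J_sq cmat_uminus cmat_mat Ab_uminus Ab_one)
    finally show ?thesis .
  qed
  have trj: "tr jj = - jj"
    by (simp add: jj_def tr_Ab J_tr cmat_uminus Ab_uminus flip: cmat_transpose)
  have trs: "tr ss = ss"
    by (simp add: ss_def tr_Ab hsym flip: cmat_transpose)
  have cc: "c i * c i = 1" if "i \<in> {1,2,3}" for i
  proof -
    have "c i * c i = tr (b i * b i)" by (simp add: c_def tr_mult)
    moreover have "b i * b i = 1" using bspec[OF AS(1) that] by (simp add: b_def)
    ultimately show ?thesis by (simp add: tr_one)
  qed
  have csum: "c 1 + c 2 + c 3 = 1"
  proof -
    have "c 1 + c 2 + c 3 = tr (b 1 + b 2 + b 3)" by (simp add: c_def tr_add)
    thus ?thesis using AS(2) by (simp add: b_def tr_one)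
  qed
  have cmm: "c i * (jj * ss) = (jj * ss) * c i" if "i \<in> {1,2,3}" for i
  proof -
    have h1: "c i * jj = jj * b i" using AS(3) by (simp add: c_def b_def jj_def)
    have h2: "b i * ss = ss * c i" using AS(4) hess_comm by (simp add: c_def b_def ss_def)
    have "c i * (jj * ss) = jj * (b i * ss)" by (simp add: h1 flip: mult.assoc)
    also have "\<dots> = (jj * ss) * c i" by (simp add: h2 mult.assoc)
    finally show ?thesis .
  qed
  have einv: "(1 - sc e' * (jj * ss)) * e = 1"
  proof -
    have "Nr ** matrix_inv Nr = mat 1" using inv_props[OF invH] by (simp add: Nr_def)
    hence "Ab (cmat (Nr ** matrix_inv Nr)) = 1" by (simp add: cmat_mat Ab_one)
    thus ?thesis
      by (simp add: cmat_mult Ab_mult e_def Nr_def cmat_diff cmat_mat Ab_diff Ab_one Ab_mat mmeq e'_def)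
  qed
  have xinv: "(1 - sc e' * (c i * (jj * ss))) * xx i = 1" if "i \<in> {1,2,3}" for i
  proof -
    have "Ni i ** matrix_inv (Ni i) = mat 1" using inv_props[OF invK[OF that]] by (simp add: Ni_def)
    hence "Ab (Ni i ** matrix_inv (Ni i)) = 1" by (simp add: Ab_one)
    thus ?thesis
      by (simp add: Ab_mult xx_def Ni_def jg Ab_diff Ab_one Ab_mat mmeq e'_def c_def b_def
          tr_Ab mult.assoc flip: mmeq)
  qed
  obtain w where w1: "xx 1 + xx 2 + xx 3 = e + w" and w2: "tr (jj * w) = - (jj * w)"
    using final_alg[OF jjsq trj trs cc csum cmm einv xinv] by blast
  define Q where "Q N = qform (M N) (cvec x)" for N
  have Qadd: "Q (u + v) = Q u + Q v" for u v by (simp add: Q_def M_plus qform_add)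
  have Qw: "Q (jj * w) = 0"
    unfolding Q_def by (rule qform_antisym) (simp add: w2 M_uminus flip: M_tr)
  have Mx: "M (jj * xx i) = cmat Jmat ** matrix_inv (Ni i)" for i
    by (simp add: M_times jj_def xx_def Ab_inverse)
  have Me: "M (jj * e) = cmat (Jmat ** matrix_inv Nr)"
    by (simp add: M_times jj_def e_def Ab_inverse cmat_mult)
  have S: "Q (jj * xx 1) + Q (jj * xx 2) + Q (jj * xx 3) = Q (jj * e)"
  proof -
    have "Q (jj * xx 1) + Q (jj * xx 2) + Q (jj * xx 3) = Q (jj * (xx 1 + xx 2 + xx 3))"
      by (simp only: Qadd distrib_left)
    also have "\<dots> = Q (jj * e)" unfolding w1 distrib_left Qadd Qw by simp
    finally show ?thesis .
  qed
  have "(\<Sum>i\<in>{1,2,3}. qform (cmat Jmat ** matrix_inv (mat 1 - mat (complex_of_real \<epsilon>) ** jacobi (g i) x)) (cvec x)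
              / complex_of_real \<epsilon>)
     = (Q (jj * xx 1) + Q (jj * xx 2) + Q (jj * xx 3)) / e'"
    by (simp add: Q_def Mx Ni_def e'_def add_divide_distrib)
  also have "\<dots> = Q (jj * e) / e'" by (simp only: S)
  also have "\<dots> = complex_of_real (qform (Jmat ** matrix_inv (mat 1 - mat \<epsilon> ** jacobi f0 x)) x / \<epsilon>)"
    by (simp add: Q_def Me qform_real e'_def Nr_def)
  finally show ?thesis .
qed

end
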